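(* Let $E\subset\mathbb R^{n-1}$ be open and $B\colon E\to\mathbb R^{n-1}$ smooth, and suppose the oriented lines $\ell_y=\{(t,\,y+tB(y)):t\in\mathbb R\}\subset\mathbb R\times\mathbb R^{n-1}=\mathbb R^n$, $y\in E$, form a smooth nondegenerate line fibration of an open subset of $\mathbb R^n$. Then for every $y\in E$, the linear map $dB_y\colon\mathbb R^{n-1}\to\mathbb R^{n-1}$ has no real eigenvalues.
   Context: A smooth line fibration of an open set $T\subset\mathbb R^n$ is a family of pairwise disjoint oriented lines with union $T$ given by a smooth unit vector field $V$ on $T$ whose integral curves are these lines; it is nondegenerate if at every point $\nabla V$ vanishes only in the direction of $V$ (i.e. $\nabla_XV=0$ implies $X\in\mathrm{span}(V)$). Here $\mathrm{Hom}(\mathbb R,\mathbb R^{n-1})$ is identified with $\mathbb R^{n-1}$. *)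

theory Defs
  imports "HOL-Analysis.Analysis"
begin

text \<open>In finite dimensions this is equivalent
  to f being C^k for every k.\<close>
definition smooth_on :: "'a::euclidean_space set \<Rightarrow> ('a \<Rightarrow> 'b::real_normed_vector) \<Rightarrow> bool" where
  "smooth_on S f \<longleftrightarrow>
     (\<exists>D :: 'a list \<Rightarrow> 'a \<Rightarrow> 'b.
        (\<forall>x\<in>S. D [] x = f x) \<and>
        (\<forall>vs. continuous_on S (D vs) \<and>
               (\<forall>x\<in>S. (D vs has_derivative (\<lambda>h. D (h # vs) x)) (at x))))"

definition fib_line :: "('a::euclidean_space \<Rightarrow> 'a) \<Rightarrow> 'a \<Rightarrow> (real \<times> 'a) set" where
  "fib_line B y = {(t, y + t *\<^sub>R B y) | t. True}"

text \<open>The lines l_y (y in E) form a smooth nondegenerate line fibration of the open set T,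
  given by the smooth unit vector field V on T whose integral curves are the (oriented) lines.\<close>
definition smooth_nondeg_line_fibration ::
  "'a::euclidean_space set \<Rightarrow> ('a \<Rightarrow> 'a) \<Rightarrow> (real \<times> 'a) set \<Rightarrow> (real \<times> 'a \<Rightarrow> real \<times> 'a) \<Rightarrow> bool" where
  "smooth_nondeg_line_fibration E B T V \<longleftrightarrow>
     open T \<and>
     T = (\<Union>y\<in>E. fib_line B y) \<and>
     (\<forall>y1\<in>E. \<forall>y2\<in>E. y1 \<noteq> y2 \<longrightarrow> fib_line B y1 \<inter> fib_line B y2 = {}) \<and>
     smooth_on T V \<and>
     (\<forall>p\<in>T. norm (V p) = 1) \<and>
     (\<forall>y\<in>E. \<forall>t. V (t, y + t *\<^sub>R B y) = (1 / norm ((1::real), B y)) *\<^sub>R (1, B y)) \<and>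
     (\<forall>p\<in>T. \<forall>X. frechet_derivative V (at p) X = 0 \<longrightarrow> X \<in> span {V p})"

end

theory Submission
  imports Defs
begin

lemma smooth_on_diff:
  assumes "smooth_on S f" "open S" "x \<in> S"
  shows "f differentiable (at x)"
proof -
  obtain D where D0: "\<forall>x\<in>S. D [] x = f x"
    and Dd: "\<forall>vs. \<forall>x\<in>S. (D vs has_derivative (\<lambda>h. D (h # vs) x)) (at x)"
    using assms(1) unfolding smooth_on_def by blast
  have "(D [] has_derivative (\<lambda>h. D [h] x)) (at x)" using Dd assms(3) by blast
  then have "(f has_derivative (\<lambda>h. D [h] x)) (at x)"
    by (rule has_derivative_transform_within_open[OF _ assms(2) assms(3)]) (use D0 in auto)
  then show ?thesis unfolding differentiable_def by blast
qed

theorem corollary3p9: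
  fixes E :: "'a::euclidean_space set"
    and B :: "'a \<Rightarrow> 'a"
    and T :: "(real \<times> 'a) set"
    and V :: "real \<times> 'a \<Rightarrow> real \<times> 'a"
  assumes "open E"
    and "smooth_on E B"
    and "smooth_nondeg_line_fibration E B T V"
  shows "\<forall>y\<in>E. \<not> (\<exists>c::real. \<exists>v. v \<noteq> 0 \<and> frechet_derivative B (at y) v = c *\<^sub>R v)"
proof (intro ballI notI, elim exE conjE)
  fix y c v
  assume yE: "y \<in> E" and v0: "v \<noteq> 0" and eig: "frechet_derivative B (at y) v = c *\<^sub>R v"
  note F = assms(3)[unfolded smooth_nondeg_line_fibration_def]
  have oT: "open T" and Tdef: "T = (\<Union>y\<in>E. fib_line B y)" and sV: "smooth_on T V"
    and Vf: "\<forall>y\<in>E. \<forall>t. V (t, y + t *\<^sub>R B y) = (1 / norm ((1::real), B y)) *\<^sub>R (1, B y)"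
    and nd: "\<forall>p\<in>T. \<forall>X. frechet_derivative V (at p) X = 0 \<longrightarrow> X \<in> span {V p}"
    using F by auto
  define DB where "DB = frechet_derivative B (at y)"
  have dB: "(B has_derivative DB) (at y)"
    unfolding DB_def using smooth_on_diff[OF assms(2,1) yE] frechet_derivative_works by blast
  have linDB: "linear DB" using dB has_derivative_linear by blast
  define W where "W = (\<lambda>b::'a. (1 / norm ((1::real), b)) *\<^sub>R ((1::real), b))"
  have Tin: "(t, y + t *\<^sub>R B y) \<in> T" for t
    unfolding Tdef fib_line_def using yE by blast
  have dV: "(V has_derivative frechet_derivative V (at (t, y + t *\<^sub>R B y))) (at (t, y + t *\<^sub>R B y))" for t
    using smooth_on_diff[OF sV oT Tin] frechet_derivative_works by blast
  have dPhi: "((\<lambda>y'. (t, y' + t *\<^sub>R B y')) has_derivative (\<lambda>h. (0, h + t *\<^sub>R DB h))) (at y)" for t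
    by (auto intro!: derivative_eq_intros dB)
  have comp: "((\<lambda>y'. V (t, y' + t *\<^sub>R B y')) has_derivative
      (\<lambda>h. frechet_derivative V (at (t, y + t *\<^sub>R B y)) (0, h + t *\<^sub>R DB h))) (at y)" for t
    using has_derivative_compose[OF dPhi dV] by (simp add: o_def)
  show False
  proof (cases "c = 0")
    case True
    let ?p = "(0::real, y + 0 *\<^sub>R B y)"
    have pos: "0 < 1 + (norm (B y))\<^sup>2" by (simp add: add_pos_nonneg)
    have neq: "1 + (norm (B y))\<^sup>2 \<noteq> 0" using pos by linarith
    have dW: "W differentiable (at (B y))"
      unfolding W_def differentiable_def
      by (rule exI, auto intro!: derivative_eq_intros simp: norm_Pair pos neq)
    then have "(W has_derivative frechet_derivative W (at (B y))) (at (B y))"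
      by (simp add: frechet_derivative_works)
    from has_derivative_compose[OF dB this]
    have dWB: "((\<lambda>y'. W (B y')) has_derivative (\<lambda>h. frechet_derivative W (at (B y)) (DB h))) (at y)" .
    have "((\<lambda>y'. W (B y')) has_derivative
      (\<lambda>h. frechet_derivative V (at ?p) (0, h + 0 *\<^sub>R DB h))) (at y)"
      by (rule has_derivative_transform_within_open[OF comp[of 0] assms(1) yE])
         (use Vf[rule_format, of _ 0] in \<open>auto simp: W_def\<close>)
    from has_derivative_unique[OF this dWB]
    have "(\<lambda>h. frechet_derivative V (at ?p) (0, h + 0 *\<^sub>R DB h)) = (\<lambda>h. frechet_derivative W (at (B y)) (DB h))" .
    from fun_cong[OF this, of v]
    have eq: "frechet_derivative V (at ?p) (0, v) = frechet_derivative W (at (B y)) (DB v)"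
      by (simp only: scale_zero_left add_0_right)
    have "DB v = 0" using eig True DB_def by simp
    moreover have "linear (frechet_derivative W (at (B y)))"
      using dW frechet_derivative_works has_derivative_linear by blast
    ultimately have "frechet_derivative V (at ?p) (0, v) = 0" using eq linear_0 by simp
    then have "(0, v) \<in> span {V ?p}" using nd Tin[of 0] by blast
    then obtain k where k: "(0, v) = k *\<^sub>R V ?p" by (auto simp: span_singleton)
    have "V ?p = (1 / norm ((1::real), B y)) *\<^sub>R (1, B y)" using Vf yE by blast
    moreover have "norm ((1::real), B y) > 0" by (simp add: norm_Pair add_pos_nonneg)
    ultimately have "k = 0" using k by auto
    then show False using k v0 by (simp add: zero_prod_def)
  next
    case False
    define t where "t = - 1 / c"
    let ?p = "(t, y + t *\<^sub>R B y)"
    define g where "g = (\<lambda>w::real \<times> 'a. (1 / fst w) *\<^sub>R snd w)"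
    have Vp: "V ?p = (1 / norm ((1::real), B y)) *\<^sub>R (1, B y)" using Vf yE by blast
    have npos: "norm ((1::real), b) > 0" for b :: 'a by (simp add: norm_Pair add_pos_nonneg)
    have fVp: "fst (V ?p) \<noteq> 0" using Vp npos[of "B y"] by simp
    have dg: "g differentiable (at (V ?p))"
      unfolding g_def differentiable_def
      by (rule exI, auto intro!: derivative_eq_intros simp: fVp)
    have "(g has_derivative frechet_derivative g (at (V ?p))) (at (V ?p))"
      using dg by (simp add: frechet_derivative_works)
    from has_derivative_compose[OF comp[of t] this]
    have dgc: "((\<lambda>y'. g (V (t, y' + t *\<^sub>R B y'))) has_derivative
      (\<lambda>h. frechet_derivative g (at (V ?p)) (frechet_derivative V (at ?p) (0, h + t *\<^sub>R DB h)))) (at y)" .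
    have "(B has_derivative
      (\<lambda>h. frechet_derivative g (at (V ?p)) (frechet_derivative V (at ?p) (0, h + t *\<^sub>R DB h)))) (at y)"
    proof (rule has_derivative_transform_within_open[OF dgc assms(1) yE])
      fix y' assume "y' \<in> E"
      then have "V (t, y' + t *\<^sub>R B y') = (1 / norm ((1::real), B y')) *\<^sub>R (1, B y')" using Vf by blast
      then show "g (V (t, y' + t *\<^sub>R B y')) = B y'" using npos[of "B y'"] by (simp add: g_def)
    qed
    from has_derivative_unique[OF dB this]
    have eq: "DB v = frechet_derivative g (at (V ?p)) (frechet_derivative V (at ?p) (0, v + t *\<^sub>R DB v))"
      by (rule fun_cong)
    have "v + t *\<^sub>R DB v = 0" using eig False unfolding DB_def t_def by simp
    moreover have "linear (frechet_derivative g (at (V ?p)))"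
      using dg frechet_derivative_works has_derivative_linear by blast
    moreover have "linear (frechet_derivative V (at ?p))"
      using dV has_derivative_linear by blast
    ultimately have "DB v = 0" using eq linear_0[of "frechet_derivative g (at (V ?p))"]
        linear_0[of "frechet_derivative V (at ?p)"] by (simp add: zero_prod_def)
    then show False using eig False v0 DB_def by simp
  qed
qed

end
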